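(* Let $W$ be a nonnegative, integer-valued random variable with $\mathbb{P}(W=0)=p$. If $W$ has increasing failure rate (IFR), then $$d_{TV}(\mathcal{L}(W),\mathrm{Geom}(p))\leq 1-p(1+\mathbb{E}W).$$
   Context: The failure rate of $W$ is $r_W(j)=\mathbb{P}(W=j)/\mathbb{P}(W>j)$, $j\in\{0,1,2,\ldots\}$; $W$ is IFR if $r_W(j)$ is nondecreasing in $j$. $\mathrm{Geom}(p)$ is the distribution with mass $p(1-p)^k$ at $k=0,1,2,\ldots$. $d_{TV}(\mathcal{L}(U),\mathcal{L}(V))=\sup_{A\subseteq\{0,1,2,\ldots\}}|\mathbb{P}(U\in A)-\mathbb{P}(V\in A)|$. *)

theory Defs
  imports "HOL-Probability.Probability"
begin

text \<open>Failure rate r_W(j) = P(W = j) / P(W > j), valued in the extended reals.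
  Convention: when P(W > j) = 0 the rate is +infinity (the usual convention for
  distributions with bounded support).\<close>
definition failure_rate :: "nat pmf \<Rightarrow> nat \<Rightarrow> ereal" where
  "failure_rate W j =
     (if measure_pmf.prob W {k. k > j} = 0 then \<infinity>
      else ereal (pmf W j / measure_pmf.prob W {k. k > j}))"

definition IFR :: "nat pmf \<Rightarrow> bool" where
  "IFR W \<longleftrightarrow> mono (failure_rate W)"

definition d_TV :: "nat pmf \<Rightarrow> nat pmf \<Rightarrow> real" where
  "d_TV P Q = (SUP A :: nat set. \<bar>measure_pmf.prob P A - measure_pmf.prob Q A\<bar>)"

end

theory Submission
  imports Defs
begin

lemma prob_gt_eq:
  fixes W :: "nat pmf"
  shows "measure_pmf.prob W {k. k > j} = 1 - (\<Sum>i<Suc j. pmf W i)"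
proof -
  have "{k. k > j} = UNIV - {..<Suc j}" by auto
  then have "measure_pmf.prob W {k. k > j} = 1 - measure_pmf.prob W {..<Suc j}"
    using measure_pmf.prob_compl[of "{..<Suc j}" W] by simp
  also have "measure_pmf.prob W {..<Suc j} = (\<Sum>i<Suc j. pmf W i)"
    by (simp add: measure_measure_pmf_finite)
  finally show ?thesis .
qed

lemma prob_ge_eq:
  fixes W :: "nat pmf"
  shows "measure_pmf.prob W {N..} = 1 - (\<Sum>i<N. pmf W i)"
proof -
  have "{N..} = UNIV - {..<N}" by auto
  then have "measure_pmf.prob W {N..} = 1 - measure_pmf.prob W {..<N}"
    using measure_pmf.prob_compl[of "{..<N}" W] by simp
  also have "measure_pmf.prob W {..<N} = (\<Sum>i<N. pmf W i)"
    by (simp add: measure_measure_pmf_finite)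
  finally show ?thesis .
qed

lemma geom_partial: "(\<Sum>k<N. p * (1 - p) ^ k) = 1 - (1 - (p::real)) ^ N"
  by (induction N) (auto simp: algebra_simps)

theorem corollary2p1:
  fixes W :: "nat pmf" and p :: real
  assumes "p = pmf W 0"
    and "p > 0"
    and "IFR W"
  shows "d_TV W (geometric_pmf p) \<le> 1 - p * (1 + measure_pmf.expectation W real)"
proof -
  define w where "w k = pmf W k" for k
  define T where "T k = 1 - (\<Sum>j<k. w j)" for k
  define q where "q = 1 - p"
  define s where "s N = (\<Sum>j<N. w j * real j)" for N
  define E where "E = measure_pmf.expectation W real"
  let ?G = "geometric_pmf p"
  have p1: "p \<le> 1" using assms(1) by (simp add: pmf_le_1)
  have q0: "q \<ge> 0" using p1 q_def by simp
  have w0: "w k \<ge> 0" for k by (simp add: w_def)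
  have TS: "T (Suc k) = T k - w k" for k by (simp add: T_def)
  have Tprob: "measure_pmf.prob W {j. j > k} = T (Suc k)" for k
    using prob_gt_eq[of W k] by (simp add: T_def w_def)
  have Tnn: "T k \<ge> 0" for k
  proof (cases k)
    case 0 then show ?thesis by (simp add: T_def)
  next
    case (Suc m) then show ?thesis using Tprob[of m] by (metis measure_nonneg)
  qed
  have T0: "T 0 = 1" by (simp add: T_def)
  have T1: "T 1 = q" by (simp add: T_def q_def w_def assms(1))
  have Tanti: "T k \<le> T 1" if "k \<ge> 1" for k
    using that
  proof (induction k rule: dec_induct)
    case base then show ?case by simp
  next
    case (step n) then show ?case using TS[of n] w0[of n] by simp
  qed
  have hz1: "p * T (Suc k) \<le> q * w k" for k
  proof (cases "q = 0")
    case True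
    have "T (Suc k) \<le> 0" using Tanti[of "Suc k"] T1 True by simp
    then have "T (Suc k) = 0" using Tnn[of "Suc k"] by simp
    then show ?thesis using True by simp
  next
    case False
    then have qpos: "q > 0" using q0 by simp
    show ?thesis
    proof (cases "T (Suc k) = 0")
      case True then show ?thesis using qpos w0[of k] by simp
    next
      case F: False
      have Tp: "T (Suc k) > 0" using F Tnn[of "Suc k"] by simp
      have "failure_rate W 0 \<le> failure_rate W k"
        using assms(3) unfolding IFR_def mono_def by simp
      moreover have "failure_rate W 0 = ereal (p / q)"
        unfolding failure_rate_def using Tprob[of 0] T1 qpos
        by (simp add: assms(1) w_def)
      moreover have "failure_rate W k = ereal (w k / T (Suc k))"
        unfolding failure_rate_def using Tprob[of k] F by (simp add: w_def)
      ultimately have "p / q \<le> w k / T (Suc k)" by simp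
      then show ?thesis using qpos Tp by (simp add: field_simps)
    qed
  qed
  have hz: "p * T k \<le> w k" for k
    using hz1[of k] TS[of k] q_def by (simp add: algebra_simps)
  have Tq: "T k \<le> q ^ k" for k
  proof (induction k)
    case 0 then show ?case by (simp add: T0)
  next
    case (Suc k)
    have "T (Suc k) \<le> q * T k" using TS[of k] hz[of k] by (simp add: q_def algebra_simps)
    also have "\<dots> \<le> q * q ^ k" using Suc q0 by (simp add: mult_left_mono)
    finally show ?case by simp
  qed
  have Tsum: "(\<Sum>k<Suc N. T k) = 1 + s (Suc N) + real N * T (Suc N)" for N
  proof (induction N)
    case 0 then show ?case by (simp add: T0 s_def)
  next
    case (Suc N)
    have "(\<Sum>k<Suc (Suc N). T k) = 1 + s (Suc N) + real N * T (Suc N) + T (Suc N)"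
      using Suc by simp
    also have "\<dots> = 1 + s (Suc (Suc N)) + real (Suc N) * T (Suc (Suc N))"
      unfolding TS[of "Suc N"] by (simp add: s_def algebra_simps)
    finally show ?case .
  qed
  have gpmf: "pmf ?G k = p * q ^ k" for k
    using assms(2) p1 by (simp add: q_def)
  have main: "measure_pmf.prob ?G A - measure_pmf.prob W A \<le> 1 - p - p * s (Suc N)" for A N
  proof -
    let ?M = "Suc N"
    let ?B = "A \<inter> {..<?M}"
    have "measure_pmf.prob W ?B \<le> measure_pmf.prob W A"
      by (rule measure_pmf.finite_measure_mono) auto
    moreover have "measure_pmf.prob W ?B = (\<Sum>k\<in>?B. w k)"
      by (simp add: measure_measure_pmf_finite w_def)
    moreover have "measure_pmf.prob ?G A \<le> measure_pmf.prob ?G (?B \<union> {?M..})"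
      by (rule measure_pmf.finite_measure_mono) auto
    moreover have "measure_pmf.prob ?G (?B \<union> {?M..}) \<le> measure_pmf.prob ?G ?B + measure_pmf.prob ?G {?M..}"
      by (rule measure_subadditive) auto
    moreover have "measure_pmf.prob ?G ?B = (\<Sum>k\<in>?B. p * q ^ k)"
      by (simp add: measure_measure_pmf_finite gpmf)
    moreover have "measure_pmf.prob ?G {?M..} = q ^ ?M"
      using prob_ge_eq[of ?G ?M] geom_partial[of p ?M] by (simp add: gpmf q_def)
    ultimately have "measure_pmf.prob ?G A - measure_pmf.prob W A \<le> (\<Sum>k\<in>?B. p * q ^ k - w k) + q ^ ?M"
      by (simp add: sum_subtractf)
    also have "(\<Sum>k\<in>?B. p * q ^ k - w k) \<le> (\<Sum>k\<in>?B. p * (q ^ k - T k))"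
      by (rule sum_mono) (use hz in \<open>auto simp: algebra_simps\<close>)
    also have "\<dots> \<le> (\<Sum>k<?M. p * (q ^ k - T k))"
      by (rule sum_mono2) (use Tq assms(2) in auto)
    also have "(\<Sum>k<?M. p * (q ^ k - T k)) = (1 - q ^ ?M) - p * (\<Sum>k<?M. T k)"
    proof -
      have "(\<Sum>k<?M. p * (q ^ k - T k)) = (\<Sum>k<?M. p * q ^ k) - (\<Sum>k<?M. p * T k)"
        by (simp add: sum_subtractf right_diff_distrib)
      also have "(\<Sum>k<?M. p * T k) = p * (\<Sum>k<?M. T k)"
        by (rule sum_distrib_left[symmetric])
      finally show ?thesis using geom_partial[of p ?M] by (simp add: q_def)
    qed
    finally have "measure_pmf.prob ?G A - measure_pmf.prob W A \<le> 1 - p * (\<Sum>k<?M. T k)"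
      by simp
    also have "\<dots> \<le> 1 - p - p * s ?M"
      using Tsum[of N] Tnn[of ?M] assms(2)
      by (simp add: algebra_simps)
    finally show ?thesis .
  qed
  have main2: "\<bar>measure_pmf.prob W A - measure_pmf.prob ?G A\<bar> \<le> 1 - p - p * s (Suc N)" for A N
  proof -
    have "measure_pmf.prob W A - measure_pmf.prob ?G A
        = measure_pmf.prob ?G (UNIV - A) - measure_pmf.prob W (UNIV - A)"
      using measure_pmf.prob_compl[of A W] measure_pmf.prob_compl[of A ?G] by simp
    then show ?thesis using main[of A N] main[of "UNIV - A" N] by linarith
  qed
  have bound: "\<bar>measure_pmf.prob W A - measure_pmf.prob ?G A\<bar> \<le> 1 - p - p * E" for A
  proof -
    have Eeq: "E = (\<integral>n. w n * real n \<partial>count_space UNIV)"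
      unfolding E_def w_def measure_pmf_eq_density by (subst integral_density) auto
    show ?thesis
    proof (cases "integrable (count_space UNIV) (\<lambda>n. w n * real n)")
      case True
      then have "summable (\<lambda>n. w n * real n)"
        unfolding integrable_count_space_nat_iff by (simp add: summable_rabs_cancel)
      then have "(\<lambda>n. w n * real n) sums E"
        using Eeq True by (simp add: integral_count_space_nat summable_sums)
      then have "s \<longlonglongrightarrow> E" unfolding sums_def s_def by simp
      then have "(\<lambda>N. s (Suc N)) \<longlonglongrightarrow> E" by (rule LIMSEQ_Suc)
      then have "(\<lambda>N. 1 - p - p * s (Suc N)) \<longlonglongrightarrow> 1 - p - p * E"
        by (intro tendsto_intros)
      then show ?thesis
        by (rule tendsto_lowerbound) (use main2 in auto)
    next
      case False
      then have "E = 0" using Eeq by (simp add: not_integrable_integral_eq)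
      then show ?thesis using main2[of A 0] by (simp add: s_def)
    qed
  qed
  show ?thesis
    unfolding d_TV_def E_def[symmetric]
    using bound by (intro cSUP_least) (auto simp: algebra_simps)
qed

end
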